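(* Let $B=\bigoplus_{i\in\mathbb{Z}}B_i$ be a $\mathbb{Z}$-graded integral domain containing $\mathbb{Q}$, and let $D:B\to B$ be a nonzero homogeneous locally nilpotent derivation such that $\ker D\not\subseteq B_0$. Then some element of $D(B)\cap\ker(D)$ is a cylindrical element of $B$.
   Context: A derivation $D$ is homogeneous if there is $d$ with $D(B_i)\subseteq B_{i+d}$ for all $i$; it is locally nilpotent if for each $b$ there is $n>0$ with $D^n(b)=0$. For nonzero homogeneous $f$, $B_{(f)}$ is the degree-$0$ subring of $B_f$. A ring is a polynomial ring in one variable if it is a polynomial ring in one variable over some subring (the zero ring counts). A cylindrical element of $B$ is a nonzero homogeneous $f$ of nonzero degree with $B_{(f)}$ a polynomial ring in one variable. *)

theory Defs
  imports "HOL-Computational_Algebra.Polynomial" "HOL-Computational_Algebra.Fraction_Field"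
begin

definition Z_graded :: "(int \<Rightarrow> 'b::comm_ring_1 set) \<Rightarrow> bool" where
  "Z_graded Bg \<longleftrightarrow>
     (\<forall>i. 0 \<in> Bg i \<and> (\<forall>x\<in>Bg i. \<forall>y\<in>Bg i. x + y \<in> Bg i \<and> - x \<in> Bg i)) \<and>
     (\<forall>i j. \<forall>x\<in>Bg i. \<forall>y\<in>Bg j. x * y \<in> Bg (i + j)) \<and>
     (\<forall>b. \<exists>!c::int \<Rightarrow> 'b. (\<forall>i. c i \<in> Bg i) \<and> finite {i. c i \<noteq> 0} \<and>
            b = (\<Sum>i\<in>{i. c i \<noteq> 0}. c i))"

definition contains_rationals :: "'b::comm_ring_1 itself \<Rightarrow> bool" where
  "contains_rationals _ \<longleftrightarrow> (\<forall>n::nat. n > 0 \<longrightarrow> (of_nat n :: 'b) dvd 1)"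

definition derivation :: "('b::comm_ring_1 \<Rightarrow> 'b) \<Rightarrow> bool" where
  "derivation D \<longleftrightarrow> (\<forall>a b. D (a + b) = D a + D b) \<and> (\<forall>a b. D (a * b) = a * D b + b * D a)"

definition homogeneous_map :: "(int \<Rightarrow> 'b set) \<Rightarrow> ('b \<Rightarrow> 'b) \<Rightarrow> bool" where
  "homogeneous_map Bg D \<longleftrightarrow> (\<exists>d. \<forall>i. D ` Bg i \<subseteq> Bg (i + d))"

definition locally_nilpotent :: "('b::zero \<Rightarrow> 'b) \<Rightarrow> bool" where
  "locally_nilpotent D \<longleftrightarrow> (\<forall>b. \<exists>n>0. (D ^^ n) b = 0)"

definition homogeneous :: "(int \<Rightarrow> 'b set) \<Rightarrow> 'b \<Rightarrow> bool" where
  "homogeneous Bg f \<longleftrightarrow> (\<exists>i. f \<in> Bg i)"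

text \<open>Degree-0 part of the localization B_f, realized inside the fraction field:
  the homogeneous elements of degree 0 of B_f are exactly b / f^n with b \<in> B_{n * deg f}.\<close>
definition hloc0 :: "(int \<Rightarrow> 'b::idom set) \<Rightarrow> 'b \<Rightarrow> 'b fract set" where
  "hloc0 Bg f = {Fract b (f ^ n) | b n. \<exists>e. f \<in> Bg e \<and> b \<in> Bg (int n * e)}"

definition is_subring :: "'a::comm_ring_1 set \<Rightarrow> bool" where
  "is_subring R \<longleftrightarrow> 0 \<in> R \<and> 1 \<in> R \<and>
     (\<forall>x\<in>R. \<forall>y\<in>R. x + y \<in> R \<and> x - y \<in> R \<and> x * y \<in> R)"

text \<open>S is a polynomial ring in one variable over some subring R: S = R[t] with t
  algebraically independent over R (evaluation R[X] \<rightarrow> S at t is bijective).\<close>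
definition poly_ring_one_var :: "'a::comm_ring_1 set \<Rightarrow> bool" where
  "poly_ring_one_var S \<longleftrightarrow> is_subring S \<and>
     (\<exists>R t. is_subring R \<and> R \<subseteq> S \<and> t \<in> S \<and>
        (\<forall>s\<in>S. \<exists>p. (\<forall>i. coeff p i \<in> R) \<and> poly p t = s) \<and>
        (\<forall>p. (\<forall>i. coeff p i \<in> R) \<and> poly p t = 0 \<longrightarrow> p = 0))"

definition cylindrical :: "(int \<Rightarrow> 'b::idom set) \<Rightarrow> 'b \<Rightarrow> bool" where
  "cylindrical Bg f \<longleftrightarrow> f \<noteq> 0 \<and> (\<exists>e. e \<noteq> 0 \<and> f \<in> Bg e) \<and> poly_ring_one_var (hloc0 Bg f)"

end

theory Submission
  imports Defs
begin

locale grLND =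
  fixes Bg :: "int \<Rightarrow> 'b::idom set" and D :: "'b \<Rightarrow> 'b" and d :: int
  assumes gr: "Z_graded Bg" and rat: "contains_rationals TYPE('b)"
    and der: "derivation D" and homD: "\<And>i x. x \<in> Bg i \<Longrightarrow> D x \<in> Bg (i + d)"
    and lnd: "locally_nilpotent D"
begin

lemma zero_in[simp]: "0 \<in> Bg i" using gr unfolding Z_graded_def by blast
lemma add_in: "x \<in> Bg i \<Longrightarrow> y \<in> Bg i \<Longrightarrow> x + y \<in> Bg i" using gr unfolding Z_graded_def by blast
lemma neg_in: "x \<in> Bg i \<Longrightarrow> - x \<in> Bg i" using gr unfolding Z_graded_def by blast
lemma diff_in: "x \<in> Bg i \<Longrightarrow> y \<in> Bg i \<Longrightarrow> x - y \<in> Bg i"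
  using add_in[of x i "-y"] neg_in[of y i] by simp
lemma mult_in: "x \<in> Bg i \<Longrightarrow> y \<in> Bg j \<Longrightarrow> x * y \<in> Bg (i + j)" using gr unfolding Z_graded_def by blast
lemma mult_in': "x \<in> Bg i \<Longrightarrow> y \<in> Bg j \<Longrightarrow> k = i + j \<Longrightarrow> x * y \<in> Bg k" using mult_in by blast
lemma sum_in: "finite I \<Longrightarrow> (\<And>k. k \<in> I \<Longrightarrow> g k \<in> Bg i) \<Longrightarrow> sum g I \<in> Bg i"
  by (induct I rule: finite_induct) (auto intro: add_in)

lemma ex1_dec: "\<exists>!c::int \<Rightarrow> 'b. (\<forall>i. c i \<in> Bg i) \<and> finite {i. c i \<noteq> 0} \<and> b = (\<Sum>i\<in>{i. c i \<noteq> 0}. c i)"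
  using gr unfolding Z_graded_def by blast

definition comp :: "'b \<Rightarrow> int \<Rightarrow> 'b" where
  "comp b = (THE c. (\<forall>i. c i \<in> Bg i) \<and> finite {i. c i \<noteq> 0} \<and> b = (\<Sum>i\<in>{i. c i \<noteq> 0}. c i))"

lemma comp_props: "(\<forall>i. comp b i \<in> Bg i) \<and> finite {i. comp b i \<noteq> 0} \<and> b = (\<Sum>i\<in>{i. comp b i \<noteq> 0}. comp b i)"
  unfolding comp_def by (rule theI'[OF ex1_dec])

lemma comp_in: "comp b i \<in> Bg i" using comp_props by blast
lemma comp_fin: "finite {i. comp b i \<noteq> 0}" using comp_props by blast
lemma comp_sum: "b = (\<Sum>i\<in>{i. comp b i \<noteq> 0}. comp b i)" using comp_props by blast

lemma comp_sum': assumes "finite I" "{i. comp b i \<noteq> 0} \<subseteq> I" shows "b = (\<Sum>i\<in>I. comp b i)"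
proof -
  have "(\<Sum>i\<in>{i. comp b i \<noteq> 0}. comp b i) = (\<Sum>i\<in>I. comp b i)"
    by (rule sum.mono_neutral_left[OF assms]) auto
  thus ?thesis using comp_sum[of b] by simp
qed

lemma dec_unique:
  assumes "\<And>i. y i \<in> Bg i" "finite I" "\<And>i. i \<notin> I \<Longrightarrow> y i = 0" "b = (\<Sum>i\<in>I. y i)"
  shows "comp b = y"
proof -
  have sub: "{i. y i \<noteq> 0} \<subseteq> I" using assms(3) by blast
  have fin: "finite {i. y i \<noteq> 0}" using sub assms(2) finite_subset by blast
  have "(\<Sum>i\<in>{i. y i \<noteq> 0}. y i) = (\<Sum>i\<in>I. y i)"
    by (rule sum.mono_neutral_left[OF assms(2) sub]) auto
  hence "b = (\<Sum>i\<in>{i. y i \<noteq> 0}. y i)" using assms(4) by simp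
  hence P: "(\<forall>i. y i \<in> Bg i) \<and> finite {i. y i \<noteq> 0} \<and> b = (\<Sum>i\<in>{i. y i \<noteq> 0}. y i)"
    using assms(1) fin by blast
  show ?thesis unfolding comp_def by (rule the1_equality[OF ex1_dec[of b]]) (rule P)
qed

lemma comp_hom: "x \<in> Bg j \<Longrightarrow> comp x = (\<lambda>i. if i = j then x else 0)"
  by (rule dec_unique[where I="{j}"]) auto

lemma comp_zero[simp]: "comp 0 = (\<lambda>i. 0)"
  by (rule dec_unique[where I="{}"]) auto

lemma deg_unique: "x \<noteq> 0 \<Longrightarrow> x \<in> Bg i \<Longrightarrow> x \<in> Bg j \<Longrightarrow> i = j"
  using comp_hom[of x i] comp_hom[of x j] by metis

lemma comp_add: "comp (a + b) = (\<lambda>i. comp a i + comp b i)"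
proof (rule dec_unique[where I="{i. comp a i \<noteq> 0} \<union> {i. comp b i \<noteq> 0}"])
  show "comp a i + comp b i \<in> Bg i" for i by (intro add_in comp_in)
  show "finite ({i. comp a i \<noteq> 0} \<union> {i. comp b i \<noteq> 0})" using comp_fin by blast
  show "i \<notin> {i. comp a i \<noteq> 0} \<union> {i. comp b i \<noteq> 0} \<Longrightarrow> comp a i + comp b i = 0" for i by auto
  show "a + b = (\<Sum>i\<in>{i. comp a i \<noteq> 0} \<union> {i. comp b i \<noteq> 0}. comp a i + comp b i)"
    using comp_sum'[of "{i. comp a i \<noteq> 0} \<union> {i. comp b i \<noteq> 0}" a] comp_sum'[of "{i. comp a i \<noteq> 0} \<union> {i. comp b i \<noteq> 0}" b]
      comp_fin by (auto simp: sum.distrib)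
qed

lemma comp_sumset: "finite I \<Longrightarrow> comp (\<Sum>k\<in>I. g k) i = (\<Sum>k\<in>I. comp (g k) i)"
  by (induct I rule: finite_induct) (auto simp: comp_add)

lemma D0[simp]: "D 0 = 0"
proof -
  have "D (0 + 0) = D 0 + D 0" using der unfolding derivation_def by blast
  thus ?thesis by (metis add_cancel_right_right add_0)
qed
lemma Dadd: "D (a + b) = D a + D b" using der unfolding derivation_def by blast
lemma Dmult: "D (a * b) = a * D b + b * D a" using der unfolding derivation_def by blast
lemma Dsum: "D (\<Sum>k\<in>I. g k) = (\<Sum>k\<in>I. D (g k))"
  by (induct I rule: infinite_finite_induct) (auto simp: Dadd)
lemma Dneg: "D (- a) = - D a"
  using Dadd[of a "-a"] by (simp add: eq_neg_iff_add_eq_0 add.commute)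
lemma Ddiff: "D (a - b) = D a - D b"
  using Dadd[of a "-b"] Dneg[of b] by simp
lemma D1[simp]: "D 1 = 0"
  using Dmult[of 1 1] by (metis add_cancel_right_right mult_1 mult_1_right)
lemma Dnat[simp]: "D (of_nat n) = 0"
  by (induct n) (auto simp: Dadd)
lemma Dmult_const: "D a = 0 \<Longrightarrow> D (a * b) = a * D b"
  by (simp add: Dmult)
lemma Dpow: "D (x ^ Suc n) = of_nat (Suc n) * x ^ n * D x"
proof (induct n)
  case 0 then show ?case by simp
next
  case (Suc n)
  have "D (x ^ Suc (Suc n)) = D (x * x ^ Suc n)" by simp
  also have "\<dots> = x * D (x ^ Suc n) + x ^ Suc n * D x" by (rule Dmult)
  also have "\<dots> = of_nat (Suc (Suc n)) * x ^ Suc n * D x" using Suc by (simp add: algebra_simps)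
  finally show ?case .
qed

lemma comp_D: "comp (D b) = (\<lambda>i. D (comp b (i - d)))"
proof (rule dec_unique[where I="(\<lambda>i. i + d) ` {i. comp b i \<noteq> 0}"])
  show "D (comp b (i - d)) \<in> Bg i" for i using homD[OF comp_in[of b "i - d"]] by simp
  show "finite ((\<lambda>i. i + d) ` {i. comp b i \<noteq> 0})" using comp_fin by blast
  show "i \<notin> (\<lambda>i. i + d) ` {i. comp b i \<noteq> 0} \<Longrightarrow> D (comp b (i - d)) = 0" for i
    by (metis (mono_tags, lifting) D0 diff_add_cancel image_eqI mem_Collect_eq)
  have "D b = (\<Sum>i\<in>{i. comp b i \<noteq> 0}. D (comp b i))"
    by (subst comp_sum) (rule Dsum)
  also have "\<dots> = (\<Sum>i\<in>(\<lambda>i. i + d) ` {i. comp b i \<noteq> 0}. D (comp b (i - d)))"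
    by (subst sum.reindex) (auto simp: inj_on_def)
  finally show "D b = (\<Sum>i\<in>(\<lambda>i. i + d) ` {i. comp b i \<noteq> 0}. D (comp b (i - d)))" .
qed

lemma comp_mult_hom: assumes h: "h \<in> Bg e" shows "comp (x * h) = (\<lambda>i. comp x (i - e) * h)"
proof (rule dec_unique[where I="(\<lambda>i. i + e) ` {i. comp x i \<noteq> 0}"])
  show "comp x (i - e) * h \<in> Bg i" for i using mult_in[OF comp_in[of x "i - e"] h] by simp
  show "finite ((\<lambda>i. i + e) ` {i. comp x i \<noteq> 0})" using comp_fin by blast
  show "i \<notin> (\<lambda>i. i + e) ` {i. comp x i \<noteq> 0} \<Longrightarrow> comp x (i - e) * h = 0" for i
    by (metis (mono_tags, lifting) mult_zero_left diff_add_cancel image_eqI mem_Collect_eq)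
  have "x * h = (\<Sum>i\<in>{i. comp x i \<noteq> 0}. comp x i * h)"
    by (subst comp_sum) (simp add: sum_distrib_right)
  also have "\<dots> = (\<Sum>i\<in>(\<lambda>i. i + e) ` {i. comp x i \<noteq> 0}. comp x (i - e) * h)"
    by (subst sum.reindex) (auto simp: inj_on_def)
  finally show "x * h = (\<Sum>i\<in>(\<lambda>i. i + e) ` {i. comp x i \<noteq> 0}. comp x (i - e) * h)" .
qed

lemma ker_comp: "D b = 0 \<Longrightarrow> D (comp b i) = 0"
  using fun_cong[OF comp_D[of b], of "i + d"] by simp

lemma one_in: "1 \<in> Bg 0"
proof -
  obtain i0 where i0: "comp 1 i0 \<noteq> 0"
    using comp_sum[of 1] by (metis (mono_tags, lifting) mem_Collect_eq one_neq_zero sum.neutral)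
  have "comp (1 * comp 1 i0) i0 = comp 1 (i0 - i0) * comp 1 i0"
    using comp_mult_hom[OF comp_in[of 1 i0]] by metis
  also have "comp (1 * comp 1 i0) i0 = comp 1 i0" using comp_hom[OF comp_in[of 1 i0]] by simp
  finally have "comp 1 0 = 1" using i0 by simp
  thus ?thesis using comp_in[of 1 0] by simp
qed

lemma pow_in: "x \<in> Bg i \<Longrightarrow> x ^ n \<in> Bg (int n * i)"
  by (induct n) (auto simp: one_in algebra_simps intro!: mult_in')


lemma Dk0[simp]: "(D ^^ j) 0 = 0" by (induct j) auto
lemma Dkadd: "(D ^^ j) (a + b) = (D ^^ j) a + (D ^^ j) b" by (induct j) (auto simp: Dadd)
lemma Dkdiff: "(D ^^ j) (a - b) = (D ^^ j) a - (D ^^ j) b" by (induct j) (auto simp: Ddiff)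
lemma Dksum: "(D ^^ j) (\<Sum>k\<in>I. g k) = (\<Sum>k\<in>I. (D ^^ j) (g k))"
proof (induct I rule: infinite_finite_induct)
  case (insert x F) then show ?case by (simp add: Dkadd)
qed simp_all
lemma Dkconst: "D a = 0 \<Longrightarrow> (D ^^ j) (a * x) = a * (D ^^ j) x"
  by (induct j) (auto simp: Dmult_const)
lemma Dk_in: "x \<in> Bg i \<Longrightarrow> (D ^^ j) x \<in> Bg (i + int j * d)"
proof (induct j)
  case 0 then show ?case by simp
next
  case (Suc j)
  then show ?case using homD[OF Suc(1)[OF Suc(2)]] by (simp add: algebra_simps)
qed

lemma charz: "n > 0 \<Longrightarrow> (of_nat n :: 'b) \<noteq> 0"
proof
  assume "n > 0" "(of_nat n :: 'b) = 0"
  then have "(0::'b) dvd 1" using rat unfolding contains_rationals_def by metis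
  then show False by simp
qed
lemma invnat: "\<exists>c. c * of_nat n = (1::'b)" if "n > 0"
proof -
  have "(of_nat n :: 'b) dvd 1" using rat that unfolding contains_rationals_def by blast
  then obtain c where "(1::'b) = of_nat n * c" by (elim dvdE) blast
  then show ?thesis by (metis mult.commute)
qed

lemma lnd': "\<exists>n. (D ^^ n) b = 0" using lnd unfolding locally_nilpotent_def by blast

end


locale slice = grLND Bg D d for Bg :: "int \<Rightarrow> 'b::idom set" and D d +
  fixes r f :: 'b
  assumes Dr: "D r = f" and Df: "D f = 0" and fnz: "f \<noteq> 0"
begin

lemma Dk_rpow: "(D ^^ j) (r ^ (k + j)) * of_nat (fact k) = of_nat (fact (k + j)) * r ^ k * f ^ j"
proof (induct j arbitrary: k)
  case 0 then show ?case by simp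
next
  case (Suc j)
  have "(D ^^ Suc j) (r ^ (k + Suc j)) = (D ^^ j) (D (r ^ Suc (k + j)))"
    by (simp add: funpow_Suc_right del: funpow.simps)
  also have "D (r ^ Suc (k + j)) = (of_nat (Suc (k + j)) * f) * r ^ (k + j)"
    using Dpow[of r "k + j"] Dr by (simp add: algebra_simps)
  also have "(D ^^ j) \<dots> = (of_nat (Suc (k + j)) * f) * (D ^^ j) (r ^ (k + j))"
    by (rule Dkconst) (simp only: Dmult Dnat Df mult_zero_right add_0)
  finally have "(D ^^ Suc j) (r ^ (k + Suc j)) * of_nat (fact k) =
     (of_nat (Suc (k + j)) * f) * ((D ^^ j) (r ^ (k + j)) * of_nat (fact k))" by (simp add: algebra_simps)
  also have "\<dots> = (of_nat (Suc (k + j)) * f) * (of_nat (fact (k + j)) * r ^ k * f ^ j)"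
    by (simp only: Suc)
  also have "\<dots> = of_nat (Suc (k + j)) * of_nat (fact (k + j)) * r ^ k * f ^ Suc j"
    by (simp add: algebra_simps)
  also have "\<dots> = of_nat (fact (k + Suc j)) * r ^ k * f ^ Suc j"
    by (simp add: algebra_simps)
  finally show ?case .
qed

lemma Dk_rpow_eq: "(D ^^ n) (r ^ n) = of_nat (fact n) * f ^ n"
proof -
  have "(D ^^ n) (r ^ (0 + n)) * of_nat (fact 0) = of_nat (fact (0 + n)) * r ^ 0 * f ^ n"
    by (rule Dk_rpow)
  then show ?thesis by (simp only: add_0 fact_0 of_nat_1 mult_1_right power_0)
qed

lemma Dpow_ker: "D x = 0 \<Longrightarrow> D (x ^ k) = 0"
  by (induct k) (simp_all add: Dmult)

lemma Dk_rpow_gt: "k < j \<Longrightarrow> (D ^^ j) (r ^ k) = 0"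
proof -
  assume "k < j"
  then have j: "j = (j - Suc k) + Suc k" by simp
  have "(D ^^ Suc k) (r ^ k) = D ((D ^^ k) (r ^ k))" by simp
  also have "\<dots> = 0" unfolding Dk_rpow_eq by (simp only: Dmult Dnat Dpow_ker[OF Df] mult_zero_right add_0)
  finally show ?thesis by (subst j, subst funpow_add) simp
qed

lemma transc: assumes A: "\<And>i. D (coeff P i) = 0" and z: "poly P r = 0" shows "P = 0"
proof (rule ccontr)
  assume nz: "P \<noteq> 0"
  let ?n = "degree P"
  have "(D ^^ ?n) (poly P r) = (\<Sum>i\<le>?n. coeff P i * (D ^^ ?n) (r ^ i))"
    by (simp add: poly_altdef Dksum Dkconst A)
  also have "\<dots> = (\<Sum>i<?n. coeff P i * (D ^^ ?n) (r ^ i)) + coeff P ?n * (D ^^ ?n) (r ^ ?n)"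
    by (simp add: lessThan_Suc_atMost[symmetric])
  also have "(\<Sum>i<?n. coeff P i * (D ^^ ?n) (r ^ i)) = 0"
    by (rule sum.neutral) (simp add: Dk_rpow_gt)
  finally have "coeff P ?n * (of_nat (fact ?n) * f ^ ?n) = 0" using z by (simp add: Dk_rpow_eq)
  moreover have "(of_nat (fact ?n) :: 'b) \<noteq> 0" by (rule charz) simp
  ultimately have "coeff P ?n = 0" using fnz by simp
  thus False using nz by simp
qed

lemma span: "(D ^^ n) b = 0 \<Longrightarrow> \<exists>k P. (\<forall>i. D (coeff P i) = 0) \<and> f ^ k * b = poly P r"
proof (induct n arbitrary: b)
  case 0 then show ?case by (intro exI[of _ 0] exI[of _ 0]) simp
next
  case (Suc n)
  define a where "a = (D ^^ n) b"
  have Da: "D a = 0" using Suc(2) unfolding a_def by simp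
  obtain c where c: "c * of_nat (fact n) = (1::'b)" using invnat[of "fact n"] by auto
  define b1 where "b1 = f ^ n * b - c * a * r ^ n"
  have "D (c * of_nat (fact n)) = 0" using c by simp
  then have "of_nat (fact n) * D c = 0" by (simp add: Dmult)
  then have Dc: "D c = 0" using charz[of "fact n"] by simp
  have Dca: "D (c * a) = 0" using Dc Da by (simp add: Dmult)
  have "(D ^^ n) b1 = (D ^^ n) (f ^ n * b) - (D ^^ n) ((c * a) * r ^ n)"
    unfolding b1_def by (simp add: Dkdiff)
  also have "\<dots> = f ^ n * a - c * a * (of_nat (fact n) * f ^ n)"
    unfolding Dkconst[OF Dpow_ker[OF Df]] Dkconst[OF Dca] Dk_rpow_eq by (simp add: a_def)
  also have "\<dots> = 0" using c by (simp add: algebra_simps)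
  finally obtain k P where P: "\<forall>i. D (coeff P i) = 0" "f ^ k * b1 = poly P r" using Suc(1) by blast
  have "f ^ (k + n) * b = poly (P + monom (f ^ k * c * a) n) r"
    using P(2) unfolding b1_def by (simp add: poly_monom algebra_simps power_add)
  moreover have "\<forall>i. D (coeff (P + monom (f ^ k * c * a) n) i) = 0"
    using P(1) Dpow_ker[OF Df] Dc Da by (simp add: Dadd Dmult)
  ultimately show ?case by blast
qed

lemma hspan:
  assumes b: "b \<in> Bg j" and fe: "f \<in> Bg e" and rd: "r \<in> Bg \<delta>"
  shows "\<exists>k P. (\<forall>i. D (coeff P i) = 0 \<and> coeff P i \<in> Bg (j + int k * e - int i * \<delta>)) \<and> f ^ k * b = poly P r"
proof -
  obtain n where "(D ^^ n) b = 0" using lnd' by blast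
  then obtain k P where P: "\<forall>i. D (coeff P i) = 0" "f ^ k * b = poly P r" using span by blast
  define J where "J = j + int k * e"
  have inJ: "f ^ k * b \<in> Bg J" unfolding J_def using mult_in[OF pow_in[OF fe] b] by (simp add: algebra_simps)
  define N where "N = degree P"
  define Q where "Q = (\<Sum>i\<le>N. monom (comp (coeff P i) (J - int i * \<delta>)) i)"
  have "f ^ k * b = comp (f ^ k * b) J" using comp_hom[OF inJ] by simp
  also have "\<dots> = (\<Sum>i\<le>N. comp (coeff P i * r ^ i) J)"
    unfolding P(2) poly_altdef N_def by (simp add: comp_sumset)
  also have "\<dots> = (\<Sum>i\<le>N. comp (coeff P i) (J - int i * \<delta>) * r ^ i)"
    by (rule sum.cong[OF refl]) (simp add: comp_mult_hom[OF pow_in[OF rd]])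
  also have "\<dots> = poly Q r" unfolding Q_def by (simp add: poly_sum poly_monom)
  finally have eq: "f ^ k * b = poly Q r" .
  have "D (coeff Q i) = 0 \<and> coeff Q i \<in> Bg (j + int k * e - int i * \<delta>)" for i
  proof (cases "i \<le> N")
    case True
    then have "coeff Q i = comp (coeff P i) (J - int i * \<delta>)" unfolding Q_def by (rule coeff_sum_monom)
    then show ?thesis using ker_comp P(1) comp_in J_def by simp
  next
    case False
    then have "coeff Q i = 0" unfolding Q_def by (simp add: coeff_sum)
    then show ?thesis by simp
  qed
  then show ?thesis using eq by blast
qed

end

definition iota :: "'a::idom \<Rightarrow> 'a fract" where "iota x = Fract x 1"

lemma iota_add[simp]: "iota (a + b) = iota a + iota b" by (simp add: iota_def)
lemma iota_mult[simp]: "iota (a * b) = iota a * iota b" by (simp add: iota_def)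
lemma iota_0[simp]: "iota 0 = 0" by (simp add: iota_def fract_collapse)
lemma iota_1[simp]: "iota 1 = 1" by (simp add: iota_def fract_collapse)
lemma iota_neg[simp]: "iota (- a) = - iota a" by (simp add: iota_def)
lemma iota_diff[simp]: "iota (a - b) = iota a - iota b" by (simp add: iota_def)
lemma iota_pow[simp]: "iota (a ^ n) = iota a ^ n" by (induct n) auto
lemma iota_sum[simp]: "iota (\<Sum>k\<in>I. g k) = (\<Sum>k\<in>I. iota (g k))"
  by (induct I rule: infinite_finite_induct) auto
lemma iota_eq0[simp]: "iota a = 0 \<longleftrightarrow> a = 0" by (simp add: iota_def eq_fract Zero_fract_def)
lemma iota_inj: "iota a = iota b \<longleftrightarrow> a = b"
  using iota_eq0[of "a - b"] by (simp del: iota_eq0)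
lemma Fract_iota: "Fract a b = iota a / iota b"
proof (cases "b = 0")
  case True then show ?thesis by (simp add: fract_collapse)
next
  case False then show ?thesis by (simp add: iota_def)
qed

context grLND begin

definition Dg :: "int set" where "Dg = {e. \<exists>a. D a = 0 \<and> a \<noteq> 0 \<and> a \<in> Bg e}"
definition Gm :: "int \<Rightarrow> bool" where "Gm x \<longleftrightarrow> (\<exists>u v. u \<in> Dg \<and> v \<in> Dg \<and> x = u - v)"

lemma ker_mult: "D a = 0 \<Longrightarrow> D b = 0 \<Longrightarrow> D (a * b) = 0" by (simp add: Dmult)
lemma ker_pow: "D a = 0 \<Longrightarrow> D (a ^ n) = 0" by (induct n) (auto simp: ker_mult)

lemma Dg_I: "D a = 0 \<Longrightarrow> a \<noteq> 0 \<Longrightarrow> a \<in> Bg e \<Longrightarrow> e \<in> Dg" unfolding Dg_def by blast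
lemma Dg_0: "0 \<in> Dg" using Dg_I[OF D1 one_neq_zero one_in] .
lemma Dg_add: assumes "x \<in> Dg" "y \<in> Dg" shows "x + y \<in> Dg"
proof -
  obtain a where a: "D a = 0" "a \<noteq> 0" "a \<in> Bg x" using assms(1) unfolding Dg_def by blast
  obtain b where b: "D b = 0" "b \<noteq> 0" "b \<in> Bg y" using assms(2) unfolding Dg_def by blast
  show ?thesis by (rule Dg_I[of "a * b"]) (use a b in \<open>auto simp: ker_mult mult_in\<close>)
qed
lemma Dg_mult: assumes "x \<in> Dg" shows "int n * x \<in> Dg"
proof -
  obtain a where a: "D a = 0" "a \<noteq> 0" "a \<in> Bg x" using assms(1) unfolding Dg_def by blast
  show ?thesis by (rule Dg_I[of "a ^ n"]) (use a in \<open>auto simp: ker_pow pow_in\<close>)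
qed
lemma Gm_Dg: "x \<in> Dg \<Longrightarrow> Gm x" unfolding Gm_def using Dg_0 by force
lemma Gm_diff: "Gm x \<Longrightarrow> Gm y \<Longrightarrow> Gm (x - y)"
  unfolding Gm_def
proof (elim exE conjE)
  fix u v u' v' assume *: "u \<in> Dg" "v \<in> Dg" "x = u - v" "u' \<in> Dg" "v' \<in> Dg" "y = u' - v'"
  show "\<exists>u v. u \<in> Dg \<and> v \<in> Dg \<and> x - y = u - v"
    by (rule exI[of _ "u + v'"], rule exI[of _ "v + u'"]) (use * in \<open>auto intro: Dg_add\<close>)
qed
lemma Gm_neg: "Gm x \<Longrightarrow> Gm (- x)" using Gm_diff[OF Gm_Dg[OF Dg_0]] by fastforce
lemma Gm_multn: assumes "Gm x" shows "Gm (int n * x)"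
proof -
  obtain u v where *: "u \<in> Dg" "v \<in> Dg" "x = u - v" using assms unfolding Gm_def by blast
  show ?thesis unfolding Gm_def
    by (rule exI[of _ "int n * u"], rule exI[of _ "int n * v"]) (use * in \<open>auto simp: right_diff_distrib intro: Dg_mult\<close>)
qed

end

context slice begin

definition Lc :: "'b set \<Rightarrow> 'b fract set" where
  "Lc X = {iota b / iota f ^ n | b n. b \<in> X \<and> (\<exists>E. f \<in> Bg E \<and> b \<in> Bg (int n * E))}"

lemma hloc0_Lc: "hloc0 Bg f = Lc UNIV"
  unfolding hloc0_def Lc_def by (simp add: Fract_iota)

lemma Lc_subring:
  assumes E: "f \<in> Bg E" and X0: "0 \<in> X" and X1: "1 \<in> X"
    and Xa: "\<And>x y. x \<in> X \<Longrightarrow> y \<in> X \<Longrightarrow> x + y \<in> X"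
    and Xd: "\<And>x y. x \<in> X \<Longrightarrow> y \<in> X \<Longrightarrow> x - y \<in> X"
    and Xm: "\<And>x y. x \<in> X \<Longrightarrow> y \<in> X \<Longrightarrow> x * y \<in> X" and Xf: "f \<in> X"
  shows "is_subring (Lc X)"
proof -
  have Lc_eq: "Lc X = {iota b / iota f ^ n | b n. b \<in> X \<and> b \<in> Bg (int n * E)}"
  proof -
    have "(\<exists>E'. f \<in> Bg E' \<and> b \<in> Bg (int n * E')) \<longleftrightarrow> b \<in> Bg (int n * E)" for b n
      using deg_unique[OF fnz _ E] E by blast
    then show ?thesis unfolding Lc_def by simp
  qed
  have fp: "f ^ n \<in> X" for n by (induct n) (auto intro: Xm X1 Xf)
  have nz: "iota f \<noteq> 0" using fnz by simp
  show ?thesis unfolding is_subring_def Lc_eq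
  proof (intro conjI ballI)
    show "0 \<in> {iota b / iota f ^ n | b n. b \<in> X \<and> b \<in> Bg (int n * E)}"
      by (rule CollectI, rule exI[of _ 0], rule exI[of _ 0]) (simp add: X0)
    show "1 \<in> {iota b / iota f ^ n | b n. b \<in> X \<and> b \<in> Bg (int n * E)}"
      by (rule CollectI, rule exI[of _ 1], rule exI[of _ 0]) (simp add: X1 one_in)
    fix x y assume x: "x \<in> {iota b / iota f ^ n | b n. b \<in> X \<and> b \<in> Bg (int n * E)}"
      and y: "y \<in> {iota b / iota f ^ n | b n. b \<in> X \<and> b \<in> Bg (int n * E)}"
    obtain b1 n1 where 1: "x = iota b1 / iota f ^ n1" "b1 \<in> X" "b1 \<in> Bg (int n1 * E)" using x by blast
    obtain b2 n2 where 2: "y = iota b2 / iota f ^ n2" "b2 \<in> X" "b2 \<in> Bg (int n2 * E)" using y by blast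
    have d1: "b1 * f ^ n2 \<in> Bg (int (n1 + n2) * E)" by (rule mult_in'[OF 1(3) pow_in[OF E]]) (simp add: algebra_simps)
    have d2: "b2 * f ^ n1 \<in> Bg (int (n1 + n2) * E)" by (rule mult_in'[OF 2(3) pow_in[OF E]]) (simp add: algebra_simps)
    have d3: "b1 * b2 \<in> Bg (int (n1 + n2) * E)" by (rule mult_in'[OF 1(3) 2(3)]) (simp add: algebra_simps)
    have "x + y = iota (b1 * f ^ n2 + b2 * f ^ n1) / iota f ^ (n1 + n2)"
      unfolding 1 2 using nz by (simp add: field_simps power_add)
    then show "x + y \<in> {iota b / iota f ^ n | b n. b \<in> X \<and> b \<in> Bg (int n * E)}"
      using d1 d2 1 2 fp by (blast intro: Xa Xm add_in)
    have "x - y = iota (b1 * f ^ n2 - b2 * f ^ n1) / iota f ^ (n1 + n2)"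
      unfolding 1 2 using nz by (simp add: field_simps power_add)
    then show "x - y \<in> {iota b / iota f ^ n | b n. b \<in> X \<and> b \<in> Bg (int n * E)}"
      using d1 d2 1 2 fp by (blast intro: Xd Xm diff_in)
    have "x * y = iota (b1 * b2) / iota f ^ (n1 + n2)"
      unfolding 1 2 using nz by (simp add: field_simps power_add)
    then show "x * y \<in> {iota b / iota f ^ n | b n. b \<in> X \<and> b \<in> Bg (int n * E)}"
      using d3 1 2 by (blast intro: Xm)
  qed
qed


lemma Lc_eq: assumes E: "f \<in> Bg E"
  shows "Lc X = {iota b / iota f ^ n | b n. b \<in> X \<and> b \<in> Bg (int n * E)}"
proof -
  have "(\<exists>E'. f \<in> Bg E' \<and> b \<in> Bg (int n * E')) \<longleftrightarrow> b \<in> Bg (int n * E)" for b n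
    using deg_unique[OF fnz _ E] E by blast
  then show ?thesis unfolding Lc_def by simp
qed

end

lemma sum_reindex_mult:
  fixes a :: "nat \<Rightarrow> 'a::comm_semiring_1"
  assumes m: "m > 0" and dv: "\<And>i. a i \<noteq> 0 \<Longrightarrow> m dvd i" and big: "\<And>i. i > N \<Longrightarrow> a i = 0"
  shows "(\<Sum>q\<le>N. a (m * q) * x ^ (m * q)) = (\<Sum>i\<le>N. a i * x ^ i)"
proof -
  let ?h = "\<lambda>i. a i * x ^ i"
  have inj: "inj_on ((*) m) {..N}" using m by (auto simp: inj_on_def)
  have "(\<Sum>q\<le>N. a (m * q) * x ^ (m * q)) = (\<Sum>i\<in>(*) m ` {..N}. ?h i)"
    by (simp add: sum.reindex[OF inj])
  also have "\<dots> = (\<Sum>i\<in>(*) m ` {..N} \<union> {..N}. ?h i)"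
  proof (rule sum.mono_neutral_left)
    show "\<forall>i\<in>(*) m ` {..N} \<union> {..N} - (*) m ` {..N}. ?h i = 0"
    proof
      fix i assume i: "i \<in> (*) m ` {..N} \<union> {..N} - (*) m ` {..N}"
      show "?h i = 0"
      proof (cases "a i = 0")
        case False
        then obtain q where q: "i = m * q" using dv by (auto elim: dvdE)
        have "q \<le> i" using m q by simp
        moreover have "i \<le> N" using i by auto
        ultimately have "q \<in> {..N}" by simp
        then have "i \<in> (*) m ` {..N}" using q by blast
        then show ?thesis using i by blast
      qed simp
    qed
  qed auto
  also have "\<dots> = (\<Sum>i\<le>N. ?h i)"
  proof (rule sum.mono_neutral_right)
    show "\<forall>i\<in>(*) m ` {..N} \<union> {..N} - {..N}. ?h i = 0" using big by auto
  qed auto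
  finally show ?thesis .
qed

context slice begin

lemma core:
  fixes r0 f0 \<alpha> \<beta> g :: 'b and m :: nat and \<delta> ef ea eb eg :: int
  assumes rdef: "r = r0 * (\<alpha> * \<beta> * g)" and fdef: "f = f0 * (\<alpha> * \<beta> * g)"
    and Da: "D \<alpha> = 0" and Db: "D \<beta> = 0" and Dgg: "D g = 0"
    and nza: "\<alpha> \<noteq> 0" and nzb: "\<beta> \<noteq> 0" and nzg: "g \<noteq> 0" and nzf0: "f0 \<noteq> 0"
    and ina: "\<alpha> \<in> Bg ea" and inb: "\<beta> \<in> Bg eb" and ing: "g \<in> Bg eg" and inf0: "f0 \<in> Bg ef"
    and inr0: "r0 \<in> Bg \<delta>"
    and mpos: "m > 0" and md: "int m * \<delta> = ea - eb"
    and mdvd: "\<And>i. Gm (int i * \<delta>) \<Longrightarrow> m dvd i"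
  shows "poly_ring_one_var (hloc0 Bg f)"
proof -
  define c where "c = \<alpha> * \<beta> * g"
  define ec where "ec = ea + eb + eg"
  define E where "E = ef + ec"
  define \<delta>' where "\<delta>' = \<delta> + ec"
  define u where "u = \<alpha> * c ^ m"
  define X where "X = {a. D a = 0}"
  have Dc: "D c = 0" unfolding c_def using Da Db Dgg by (simp add: ker_mult)
  have nzc: "c \<noteq> 0" unfolding c_def using nza nzb nzg by simp
  have inc: "c \<in> Bg ec" unfolding c_def ec_def by (intro mult_in' [OF mult_in[OF ina inb] ing]) simp
  have fE: "f \<in> Bg E" unfolding fdef E_def c_def[symmetric] using mult_in[OF inf0 inc] .
  have rE: "r \<in> Bg \<delta>'" unfolding rdef \<delta>'_def c_def[symmetric] using mult_in[OF inr0 inc] .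
  have nzu: "u \<noteq> 0" unfolding u_def using nza nzc by simp
  have Du: "D u = 0" unfolding u_def using Da Dc by (simp add: ker_mult ker_pow)
  have nzr0: "iota \<alpha> \<noteq> 0" "iota \<beta> \<noteq> 0" "iota g \<noteq> 0" "iota f0 \<noteq> 0" "iota c \<noteq> 0" "iota f \<noteq> 0" "iota u \<noteq> 0"
    using nza nzb nzg nzf0 nzc fnz nzu by simp_all
  have E_Dg: "E \<in> Dg" using Dg_I[OF Df fnz fE] .
  have ec_Dg: "ec \<in> Dg" using Dg_I[OF Dc nzc inc] .
  have SR: "is_subring (Lc UNIV)" by (rule Lc_subring[OF fE]) auto
  have RR: "is_subring (Lc X)" by (rule Lc_subring[OF fE]) (auto simp: X_def Dadd Ddiff ker_mult Df)
  have RS: "Lc X \<subseteq> Lc UNIV" unfolding Lc_def by blast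
  define t where "t = iota (\<beta> * \<beta> * f0 * g * r0 ^ m) / iota f"
  have tS: "t \<in> Lc UNIV"
  proof -
    have "\<beta> * \<beta> * f0 * g * r0 ^ m \<in> Bg (int 1 * E)"
    proof (rule mult_in'[OF mult_in[OF mult_in[OF mult_in[OF inb inb] inf0] ing] pow_in[OF inr0]])
      show "int 1 * E = eb + eb + ef + eg + int m * \<delta>" unfolding md E_def ec_def by simp
    qed
    then show ?thesis unfolding Lc_eq[OF fE] t_def by (metis (mono_tags, lifting) UNIV_I mem_Collect_eq power_one_right)
  qed
  have t_eq: "t = iota \<beta> * iota r ^ m / iota u"
    unfolding t_def u_def rdef fdef c_def using nzr0 unfolding c_def
    by (simp add: field_simps power_mult_distrib)
  have Df0: "D f0 = 0"
  proof -
    have "0 = D (f0 * c)" using Df fdef c_def by simp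
    also have "\<dots> = c * D f0" by (simp add: Dmult Dc)
    finally show ?thesis using nzc by simp
  qed
  have a0X: "0 \<in> Lc X" using RR unfolding is_subring_def by blast
  have span: "\<forall>s\<in>Lc UNIV. \<exists>p. (\<forall>i. coeff p i \<in> Lc X) \<and> poly p t = s"
  proof
    fix s assume "s \<in> Lc UNIV"
    then obtain b n where s: "s = iota b / iota f ^ n" "b \<in> Bg (int n * E)" unfolding Lc_eq[OF fE] by blast
    obtain k P where P: "\<forall>i. D (coeff P i) = 0 \<and> coeff P i \<in> Bg (int n * E + int k * E - int i * \<delta>')"
        "f ^ k * b = poly P r"
      using hspan[OF s(2) fE rE] by blast
    define a where "a = coeff P"
    define N where "N = degree P"
    have a_in: "a j \<in> Bg (int n * E + int k * E - int j * \<delta>')" for j using P(1) a_def by simp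
    have Dak: "D (a j) = 0" for j using P(1) a_def by simp
    have adv: "a i \<noteq> 0 \<Longrightarrow> m dvd i" for i
    proof -
      assume nz: "a i \<noteq> 0"
      have "int n * E + int k * E - int i * \<delta>' \<in> Dg" using Dg_I[OF Dak nz a_in] .
      moreover have "int (n + k) * E \<in> Dg" using Dg_mult[OF E_Dg] .
      ultimately have "Gm (int (n + k) * E - (int n * E + int k * E - int i * \<delta>'))" unfolding Gm_def by blast
      hence g1: "Gm (int i * \<delta>')" by (simp add: algebra_simps)
      have "Gm (int i * ec)" using Gm_Dg[OF Dg_mult[OF ec_Dg]] .
      from Gm_diff[OF g1 this] have "Gm (int i * \<delta>)" by (simp add: \<delta>'_def algebra_simps)
      thus ?thesis by (rule mdvd)
    qed
    have abig: "i > N \<Longrightarrow> a i = 0" for i by (simp add: a_def N_def coeff_eq_0)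
    define \<rho> where "\<rho> q = iota (a (m * q) * u ^ q * (f0 * \<alpha> * g) ^ q) / iota f ^ (n + k + q)" for q
    have uin: "u \<in> Bg (ea + int m * ec)" unfolding u_def by (rule mult_in[OF ina pow_in[OF inc]])
    have fin': "f0 * \<alpha> * g \<in> Bg (ef + ea + eg)" by (rule mult_in[OF mult_in[OF inf0 ina] ing])
    have \<rho>R: "\<rho> q \<in> Lc X" for q
    proof -
      have deq: "int (n + k + q) * E = (int n * E + int k * E - int (m * q) * \<delta>') + int q * (ea + int m * ec) + int q * (ef + ea + eg)"
      proof -
        have "int (m * q) * \<delta>' = int q * (int m * \<delta>) + int q * int m * ec" by (simp add: \<delta>'_def algebra_simps)
        also have "\<dots> = int q * (ea - eb) + int q * int m * ec" by (simp only: md)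
        finally show ?thesis by (simp add: E_def ec_def algebra_simps)
      qed
      have "a (m * q) * u ^ q * (f0 * \<alpha> * g) ^ q \<in> Bg (int (n + k + q) * E)"
        unfolding deq by (intro mult_in a_in pow_in uin fin')
      moreover have "a (m * q) * u ^ q * (f0 * \<alpha> * g) ^ q \<in> X"
        unfolding X_def using Dak Du Da Dgg Df0 by (simp add: ker_mult ker_pow)
      ultimately show ?thesis unfolding Lc_eq[OF fE] \<rho>_def by blast
    qed
    define p where "p = (\<Sum>q\<le>N. monom (\<rho> q) q)"
    have pc: "\<forall>i. coeff p i \<in> Lc X"
    proof
      fix i show "coeff p i \<in> Lc X"
      proof (cases "i \<le> N")
        case True
        then have "coeff p i = \<rho> i" unfolding p_def by (rule coeff_sum_monom)
        then show ?thesis using \<rho>R by simp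
      next
        case False
        then have "coeff p i = 0" unfolding p_def by (simp add: coeff_sum)
        then show ?thesis using a0X by simp
      qed
    qed
    have ff: "iota f = iota (f0 * \<alpha> * g) * iota \<beta>" unfolding fdef by simp
    have trm: "\<rho> q * t ^ q = iota (a (m * q) * r ^ (m * q)) / iota f ^ (n + k)" for q
    proof -
      have "\<rho> q * t ^ q = iota (a (m * q)) * iota u ^ q * (iota (f0 * \<alpha> * g) ^ q * iota \<beta> ^ q) * iota r ^ (m * q) / (iota f ^ (n + k + q) * iota u ^ q)"
        unfolding \<rho>_def t_eq using nzr0 by (simp add: power_mult_distrib power_mult field_simps)
      also have "iota (f0 * \<alpha> * g) ^ q * iota \<beta> ^ q = iota f ^ q" unfolding ff by (simp add: power_mult_distrib)
      also have "iota (a (m * q)) * iota u ^ q * iota f ^ q * iota r ^ (m * q) / (iota f ^ (n + k + q) * iota u ^ q)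
          = iota (a (m * q) * r ^ (m * q)) / iota f ^ (n + k)"
        using nzr0 by (simp add: power_add field_simps)
      finally show ?thesis .
    qed
    have "poly p t = (\<Sum>q\<le>N. \<rho> q * t ^ q)" unfolding p_def by (simp add: poly_sum poly_monom)
    also have "\<dots> = (\<Sum>q\<le>N. iota (a (m * q) * r ^ (m * q)) / iota f ^ (n + k))" using trm by simp
    also have "\<dots> = iota (\<Sum>q\<le>N. a (m * q) * r ^ (m * q)) / iota f ^ (n + k)"
      by (simp add: sum_divide_distrib del: iota_mult)
    also have "(\<Sum>q\<le>N. a (m * q) * r ^ (m * q)) = (\<Sum>i\<le>N. a i * r ^ i)"
      by (rule sum_reindex_mult[OF mpos adv abig])
    also have "\<dots> = f ^ k * b" unfolding P(2) a_def N_def poly_altdef ..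
    also have "iota (f ^ k * b) / iota f ^ (n + k) = s" unfolding s(1) using nzr0 by (simp add: power_add field_simps)
    finally show "\<exists>p. (\<forall>i. coeff p i \<in> Lc X) \<and> poly p t = s" using pc by blast
  qed
  have indep: "\<forall>p. (\<forall>i. coeff p i \<in> Lc X) \<and> poly p t = 0 \<longrightarrow> p = 0"
  proof (intro allI impI, elim conjE)
    fix p assume pc: "\<forall>i. coeff p i \<in> Lc X" and z: "poly p t = 0"
    have "\<forall>q. \<exists>x nn. D x = 0 \<and> coeff p q = iota x / iota f ^ nn" using pc unfolding Lc_eq[OF fE] X_def by blast
    then obtain xq nq where xq: "\<And>q. D (xq q) = 0" "\<And>q. coeff p q = iota (xq q) / iota f ^ nq q" by metis
    define N where "N = degree p"
    define M where "M = (\<Sum>q\<le>N. nq q)"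
    have nqM: "q \<le> N \<Longrightarrow> nq q \<le> M" for q unfolding M_def by (rule member_le_sum) auto
    define y where "y q = xq q * f ^ (M - nq q)" for q
    have cy: "q \<le> N \<Longrightarrow> coeff p q = iota (y q) / iota f ^ M" for q
    proof -
      assume "q \<le> N"
      then have M: "M = nq q + (M - nq q)" using nqM by simp
      show ?thesis unfolding y_def xq(2) using nzr0 by (subst M) (simp add: power_add field_simps)
    qed
    define zz where "zz q = y q * \<beta> ^ q * u ^ (N - q)" for q
    have tm: "iota f ^ M * iota u ^ N * (coeff p q * t ^ q) = iota (zz q * r ^ (m * q))" if q: "q \<le> N" for q
    proof -
      have N: "N = q + (N - q)" using q by simp
      show ?thesis unfolding cy[OF q] t_eq zz_def using nzr0
        by (subst N) (simp add: power_add power_mult power_mult_distrib field_simps)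
    qed
    have "0 = iota f ^ M * iota u ^ N * poly p t" using z by simp
    also have "\<dots> = (\<Sum>q\<le>N. iota f ^ M * iota u ^ N * (coeff p q * t ^ q))"
      unfolding poly_altdef N_def by (simp add: sum_distrib_left)
    also have "\<dots> = iota (\<Sum>q\<le>N. zz q * r ^ (m * q))" using tm by simp
    finally have z0: "(\<Sum>q\<le>N. zz q * r ^ (m * q)) = 0" by (metis iota_eq0)
    define P' where "P' = (\<Sum>q\<le>N. monom (zz q) (m * q))"
    have Dzz: "D (zz q) = 0" for q unfolding zz_def y_def using xq(1) Df Db Du by (simp add: ker_mult ker_pow)
    have "poly P' r = 0" unfolding P'_def using z0 by (simp add: poly_sum poly_monom)
    moreover have "\<forall>i. D (coeff P' i) = 0" unfolding P'_def coeff_sum Dsum by (intro allI sum.neutral ballI) (auto simp: Dzz)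
    ultimately have P'0: "P' = 0" using transc by blast
    have "coeff p q = 0" for q
    proof (cases "q \<le> N")
      case True
      have "coeff P' (m * q) = zz q" unfolding P'_def coeff_sum using mpos True by simp
      then have "zz q = 0" using P'0 by simp
      then have "y q = 0" unfolding zz_def using nzb nzu by simp
      then show ?thesis using cy[OF True] by simp
    next
      case False then show ?thesis by (simp add: N_def coeff_eq_0)
    qed
    then show "p = 0" by (intro poly_eqI) simp
  qed
  show ?thesis unfolding poly_ring_one_var_def hloc0_Lc using SR RR RS tS span indep by blast
qed

end

context grLND begin

lemma main:
  assumes Dnz: "D \<noteq> (\<lambda>_. 0)" and kr: "\<not> {b. D b = 0} \<subseteq> Bg 0"
  shows "\<exists>F \<in> range D \<inter> {b. D b = 0}. cylindrical Bg F"
proof -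
  obtain b0 where b0: "D b0 = 0" "b0 \<notin> Bg 0" using kr by blast
  have "\<exists>i. i \<noteq> 0 \<and> comp b0 i \<noteq> 0"
  proof (rule ccontr)
    assume "\<not> ?thesis"
    then have "{i. comp b0 i \<noteq> 0} \<subseteq> {0}" by auto
    then have "b0 = (\<Sum>i\<in>{0}. comp b0 i)" by (intro comp_sum') auto
    then show False using b0(2) comp_in[of b0 0] by simp
  qed
  then obtain eh where eh: "eh \<noteq> 0" "comp b0 eh \<noteq> 0" by blast
  define h where "h = comp b0 eh"
  have Dh: "D h = 0" using ker_comp[OF b0(1)] h_def by simp
  have inh: "h \<in> Bg eh" using comp_in h_def by simp
  have nzh: "h \<noteq> 0" using eh h_def by simp
  obtain b1 where b1: "D b1 \<noteq> 0" using Dnz by auto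
  have "\<exists>i. D (comp b1 i) \<noteq> 0"
  proof (rule ccontr)
    assume a: "\<not> ?thesis"
    have "D b1 = D (\<Sum>i\<in>{i. comp b1 i \<noteq> 0}. comp b1 i)" using comp_sum[of b1] by (rule arg_cong)
    also have "\<dots> = (\<Sum>i\<in>{i. comp b1 i \<noteq> 0}. D (comp b1 i))" by (rule Dsum)
    also have "\<dots> = 0" using a by simp
    finally show False using b1 by simp
  qed
  then obtain i1 where i1: "D (comp b1 i1) \<noteq> 0" by blast
  define x where "x = comp b1 i1"
  have inx: "x \<in> Bg i1" using comp_in x_def by simp
  obtain n where n: "(D ^^ n) x = 0" using lnd' by blast
  have ex: "\<exists>N. (D ^^ Suc (Suc N)) x = 0" by (rule exI[of _ n]) (simp add: n)
  define N where "N = (LEAST N. (D ^^ Suc (Suc N)) x = 0)"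
  have N1: "(D ^^ Suc (Suc N)) x = 0" unfolding N_def by (rule LeastI_ex[OF ex])
  have N2: "(D ^^ Suc N) x \<noteq> 0"
  proof (cases N)
    case 0 then show ?thesis using i1 x_def by simp
  next
    case (Suc M)
    have "M < N" using Suc by simp
    then have "\<not> (D ^^ Suc (Suc M)) x = 0" unfolding N_def by (rule not_less_Least)
    then show ?thesis using Suc by simp
  qed
  define r0 where "r0 = (D ^^ N) x"
  define \<delta> where "\<delta> = i1 + int N * d"
  define f0 where "f0 = D r0"
  define ef where "ef = \<delta> + d"
  have inr0: "r0 \<in> Bg \<delta>" unfolding r0_def \<delta>_def by (rule Dk_in[OF inx])
  have nzf0: "f0 \<noteq> 0" using N2 unfolding f0_def r0_def by simp
  have Df0: "D f0 = 0" using N1 unfolding f0_def r0_def by simp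
  have inf0: "f0 \<in> Bg ef" unfolding f0_def ef_def by (rule homD[OF inr0])
  have exm: "\<exists>m. m > 0 \<and> Gm (int m * \<delta>)"
  proof (rule exI[of _ "nat \<bar>eh\<bar>"], intro conjI)
    show "nat \<bar>eh\<bar> > 0" using eh by simp
    have g1: "Gm (int (nat \<bar>\<delta>\<bar>) * eh)" by (rule Gm_Dg[OF Dg_mult[OF Dg_I[OF Dh nzh inh]]])
    have g2: "Gm (- (int (nat \<bar>\<delta>\<bar>) * eh))" by (rule Gm_neg[OF g1])
    have "\<bar>eh\<bar> * \<delta> = \<bar>\<delta>\<bar> * eh \<or> \<bar>eh\<bar> * \<delta> = - (\<bar>\<delta>\<bar> * eh)"
      by (cases "eh \<ge> 0"; cases "\<delta> \<ge> 0") (auto simp: abs_if algebra_simps)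
    then show "Gm (int (nat \<bar>eh\<bar>) * \<delta>)" using g1 g2 by auto
  qed
  define m where "m = (LEAST m. m > 0 \<and> Gm (int m * \<delta>))"
  have m: "m > 0" "Gm (int m * \<delta>)" using LeastI_ex[OF exm] unfolding m_def by blast+
  have mdvd: "m dvd i" if gi: "Gm (int i * \<delta>)" for i
  proof -
    have "int i = int (i div m) * int m + int (i mod m)"
      by (metis div_mult_mod_eq of_nat_add of_nat_mult)
    then have "int (i mod m) * \<delta> = int i * \<delta> - int (i div m) * (int m * \<delta>)"
      by (simp add: algebra_simps)
    then have gmod: "Gm (int (i mod m) * \<delta>)" using Gm_diff[OF gi Gm_multn[OF m(2)]] by simp
    show "m dvd i"
    proof (rule ccontr)
      assume "\<not> m dvd i"
      then have "i mod m > 0" by (simp add: dvd_eq_mod_eq_0)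
      then have "(LEAST m. m > 0 \<and> Gm (int m * \<delta>)) \<le> i mod m" using gmod by (intro Least_le) simp
      then have "m \<le> i mod m" using m_def by simp
      moreover have "i mod m < m" using m(1) by simp
      ultimately show False by simp
    qed
  qed
  obtain \<alpha> \<beta> ea eb where ab: "D \<alpha> = 0" "\<alpha> \<noteq> 0" "\<alpha> \<in> Bg ea" "D \<beta> = 0" "\<beta> \<noteq> 0" "\<beta> \<in> Bg eb"
    "int m * \<delta> = ea - eb"
    using m(2) unfolding Gm_def Dg_def by blast
  obtain g eg where g: "D g = 0" "g \<noteq> 0" "g \<in> Bg eg" "ef + (ea + eb + eg) \<noteq> 0"
  proof (cases "ef + ea + eb = 0")
    case True
    show ?thesis by (rule that[OF Dh nzh inh]) (use True eh in simp)
  next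
    case False
    show ?thesis by (rule that[OF D1 one_neq_zero one_in]) (use False in simp)
  qed
  define c where "c = \<alpha> * \<beta> * g"
  define r where "r = r0 * c"
  define F where "F = f0 * c"
  have Dc: "D c = 0" unfolding c_def using ab g by (simp add: ker_mult)
  have DrF: "D r = F" unfolding r_def F_def f0_def using Dc by (simp add: Dmult)
  have nzF: "F \<noteq> 0" unfolding F_def c_def using nzf0 ab g by simp
  have DF: "D F = 0" unfolding F_def using Df0 Dc by (simp add: ker_mult)
  have inF: "F \<in> Bg (ef + (ea + eb + eg))" unfolding F_def c_def
    by (rule mult_in[OF inf0 mult_in[OF mult_in[OF ab(3) ab(6)] g(3)]])
  have sl: "slice Bg D d r F"
    unfolding slice_def slice_axioms_def using grLND_axioms DrF DF nzF by blast
  have cyl: "poly_ring_one_var (hloc0 Bg F)"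
    by (rule slice.core[OF sl, of r0 \<alpha> \<beta> g f0 ea eb eg ef \<delta> m])
       (use ab g nzf0 inf0 inr0 m mdvd in \<open>simp_all add: r_def F_def c_def\<close>)
  have "cylindrical Bg F" unfolding cylindrical_def using nzF inF g(4) cyl by blast
  moreover have "F \<in> range D \<inter> {b. D b = 0}" using DrF DF by auto
  ultimately show ?thesis by blast
qed

end

theorem proposition4p3:
  fixes Bg :: "int \<Rightarrow> 'b::idom set" and D :: "'b \<Rightarrow> 'b"
  assumes "Z_graded Bg"
    and "contains_rationals TYPE('b)"
    and "derivation D"
    and "homogeneous_map Bg D"
    and "locally_nilpotent D"
    and "D \<noteq> (\<lambda>_. 0)"
    and "\<not> {b. D b = 0} \<subseteq> Bg 0"
  shows "\<exists>f \<in> range D \<inter> {b. D b = 0}. cylindrical Bg f"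
proof -
  obtain d where d: "\<forall>i. D ` Bg i \<subseteq> Bg (i + d)" using assms(4) unfolding homogeneous_map_def by blast
  have "grLND Bg D d" unfolding grLND_def using assms(1,2,3,5) d by blast
  then show ?thesis using grLND.main assms(6,7) by blast
qed

end
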